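(* Let $G$ be a Polish group. Then every Haar meager subset of $G$ is meager in $G$.
   Context: Let $G$ be a Polish group (not necessarily abelian). A set $A\subseteq G$ is called Haar meager if there exist a Borel set $B\subseteq G$ with $A\subseteq B$, a compact metric space $K$, and a continuous map $f\colon K\to G$ such that $f^{-1}(gBh)$ is meager in $K$ for every $g,h\in G$. *)

theory Defs
  imports "HOL-Analysis.Analysis"
begin

definition nowhere_dense_in :: "'a topology \<Rightarrow> 'a set \<Rightarrow> bool" where
  "nowhere_dense_in X S \<longleftrightarrow> S \<subseteq> topspace X \<and> X interior_of (X closure_of S) = {}"

definition meager_in :: "'a topology \<Rightarrow> 'a set \<Rightarrow> bool" where
  "meager_in X S \<longleftrightarrow>
     (\<exists>F :: nat \<Rightarrow> 'a set. (\<forall>n. nowhere_dense_in X (F n)) \<and> S \<subseteq> (\<Union>n. F n))"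

text \<open>Haar meager sets in a (not necessarily abelian) topological group, written additively:
  the two-sided translate g B h is {g + b + h | b in B}. The compact metric space K is a
  nonempty compact subset of a metric type 'k with the subspace topology.\<close>
definition haar_meager :: "'k::metric_space itself \<Rightarrow> 'a::topological_group_add set \<Rightarrow> bool" where
  "haar_meager _ A \<longleftrightarrow>
     (\<exists>B (K :: 'k set) (f :: 'k \<Rightarrow> 'a).
        B \<in> sets borel \<and> A \<subseteq> B \<and> compact K \<and> K \<noteq> {} \<and> continuous_on K f \<and>
        (\<forall>g h. meager_in (top_of_set K) {x \<in> K. f x \<in> (\<lambda>b. g + b + h) ` B}))"

end

theory Submission
  imports Defs
begin

lemma nd_subset:
  assumes "nowhere_dense_in X S" "T \<subseteq> S"
  shows "nowhere_dense_in X T"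
proof -
  have "X closure_of T \<subseteq> X closure_of S" by (simp add: assms(2) closure_of_mono)
  then have "X interior_of (X closure_of T) \<subseteq> X interior_of (X closure_of S)"
    by (simp add: interior_of_mono)
  then show ?thesis using assms unfolding nowhere_dense_in_def by auto
qed

lemma nd_closed:
  assumes "closedin X S" "X interior_of S = {}"
  shows "nowhere_dense_in X S"
  using assms unfolding nowhere_dense_in_def
  by (simp add: closedin_subset closure_of_closedin)

lemma nd_closure:
  assumes "nowhere_dense_in X S"
  shows "nowhere_dense_in X (X closure_of S)"
  using assms unfolding nowhere_dense_in_def
  by (simp add: closure_of_subset_topspace)

lemma meager_subset:
  assumes "meager_in X S" "T \<subseteq> S"
  shows "meager_in X T"
  using assms unfolding meager_in_def by blast

lemma nd_empty: "nowhere_dense_in X {}"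
  unfolding nowhere_dense_in_def by simp

lemma meager_empty: "meager_in X {}"
  unfolding meager_in_def by (rule exI[of _ "\<lambda>n. {}"]) (simp add: nd_empty)

lemma nd_imp_meager: "nowhere_dense_in X S \<Longrightarrow> meager_in X S"
  unfolding meager_in_def by (rule exI[of _ "\<lambda>n. S"]) auto

lemma meager_UN_nat:
  assumes "\<And>i::nat. meager_in X (S i)"
  shows "meager_in X (\<Union>i. S i)"
proof -
  have "\<forall>i. \<exists>F::nat \<Rightarrow> _. (\<forall>n. nowhere_dense_in X (F n)) \<and> S i \<subseteq> (\<Union>n. F n)"
    using assms unfolding meager_in_def by blast
  from choice[OF this] obtain F :: "nat \<Rightarrow> nat \<Rightarrow> _" where F0: "\<forall>i. (\<forall>n. nowhere_dense_in X (F i n)) \<and> S i \<subseteq> (\<Union>n. F i n)" by (elim exE) (rule that)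
  then have F: "\<And>i n. nowhere_dense_in X (F i n)" "\<And>i. S i \<subseteq> (\<Union>n. F i n)"
    by auto
  define G where "G m = F (fst (prod_decode m)) (snd (prod_decode m))" for m
  have "nowhere_dense_in X (G m)" for m using F(1) by (simp add: G_def)
  moreover have "(\<Union>i. S i) \<subseteq> (\<Union>m. G m)"
  proof
    fix x assume "x \<in> (\<Union>i. S i)"
    then obtain i n where "x \<in> F i n" using F(2) by blast
    then have "x \<in> G (prod_encode (i, n))" by (simp add: G_def)
    then show "x \<in> (\<Union>m. G m)" by blast
  qed
  ultimately show ?thesis unfolding meager_in_def by (intro exI[of _ G]) simp
qed

lemma meager_UN_countable:
  assumes "countable I" "\<And>i. i \<in> I \<Longrightarrow> meager_in X (S i)"
  shows "meager_in X (\<Union>i\<in>I. S i)"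
proof (cases "I = {}")
  case True then show ?thesis by (simp add: meager_empty)
next
  case False
  have "(\<Union>i\<in>I. S i) = (\<Union>n. S (from_nat_into I n))"
  proof -
    have r: "range (from_nat_into I) = I" using range_from_nat_into[OF False assms(1)] .
    have "(\<Union>i\<in>I. S i) = (\<Union>i\<in>range (from_nat_into I). S i)" using r by simp
    also have "\<dots> = (\<Union>n. S (from_nat_into I n))" by simp
    finally show ?thesis .
  qed
  moreover have "meager_in X (\<Union>n. S (from_nat_into I n))"
    by (rule meager_UN_nat) (simp add: assms(2) False from_nat_into)
  ultimately show ?thesis by simp
qed

lemma meager_Un:
  assumes "meager_in X S" "meager_in X T"
  shows "meager_in X (S \<union> T)"
proof -
  have "S \<union> T = (\<Union>i::nat. if i = 0 then S else T)" by (auto split: if_splits)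
  moreover have "meager_in X (\<Union>i::nat. if i = 0 then S else T)"
    by (rule meager_UN_nat) (simp add: assms)
  ultimately show ?thesis by simp
qed

lemma meager_interior_empty:
  assumes "completely_metrizable_space X \<or> locally_compact_space X \<and> regular_space X"
    and "meager_in X S"
  shows "X interior_of S = {}"
proof -
  obtain F :: "nat \<Rightarrow> 'a set" where F: "\<And>n. nowhere_dense_in X (F n)" "S \<subseteq> (\<Union>n. F n)"
    using assms(2) unfolding meager_in_def by blast
  have "X interior_of \<Union>(range (\<lambda>n. X closure_of F n)) = {}"
  proof (rule Baire_category_alt[OF assms(1)])
    show "countable (range (\<lambda>n. X closure_of F n))" by simp
    fix T assume "T \<in> range (\<lambda>n. X closure_of F n)"
    then obtain n where "T = X closure_of F n" by blast
    then show "closedin X T \<and> X interior_of T = {}"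
      using F(1)[of n] unfolding nowhere_dense_in_def by simp
  qed
  moreover have "S \<subseteq> \<Union>(range (\<lambda>n. X closure_of F n))"
  proof
    fix x assume "x \<in> S"
    then obtain n where "x \<in> F n" using F(2) by blast
    moreover have "F n \<subseteq> X closure_of F n"
      using F(1)[of n] unfolding nowhere_dense_in_def by (intro closure_of_subset) simp
    ultimately show "x \<in> \<Union>(range (\<lambda>n. X closure_of F n))" by blast
  qed
  then have "X interior_of S \<subseteq> X interior_of \<Union>(range (\<lambda>n. X closure_of F n))"
    by (rule interior_of_mono)
  ultimately show ?thesis by simp
qed


lemma closed_minus_interior_nd:
  fixes C :: "'a::topological_space set"
  assumes "closed C"
  shows "nowhere_dense_in euclidean (C - interior C)"
proof (rule nd_closed)
  show "closedin euclidean (C - interior C)"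
    using assms by (simp add: closed_Diff)
  have "interior (C - interior C) = {}"
  proof (rule ccontr)
    assume "interior (C - interior C) \<noteq> {}"
    then obtain x where x: "x \<in> interior (C - interior C)" by blast
    have "interior (C - interior C) \<subseteq> interior C"
      by (rule interior_mono) blast
    then show False using x interior_subset[of "C - interior C"] by blast
  qed
  then show "euclidean interior_of (C - interior C) = {}" by simp
qed

lemma borel_baire:
  fixes S :: "'a::topological_space set"
  assumes "S \<in> sets borel"
  shows "\<exists>U. open U \<and> meager_in euclidean ((S - U) \<union> (U - S))"
  using assms unfolding sets_borel
proof (induction rule: sigma_sets.induct)
  case (Basic a)
  then show ?case by (intro exI[of _ a]) (simp add: meager_empty)
next
  case Empty
  then show ?case by (intro exI[of _ "{}"]) (simp add: meager_empty)
next
  case (Compl a)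
  then obtain U where U: "open U" "meager_in euclidean ((a - U) \<union> (U - a))" by blast
  define U' where "U' = interior (- U)"
  have "((UNIV - a) - U') \<union> (U' - (UNIV - a)) \<subseteq> ((a - U) \<union> (U - a)) \<union> ((- U) - interior (- U))"
    using interior_subset[of "- U"] unfolding U'_def by blast
  moreover have "meager_in euclidean (((a - U) \<union> (U - a)) \<union> ((- U) - interior (- U)))"
    by (intro meager_Un U(2) nd_imp_meager closed_minus_interior_nd) (simp add: U(1) closed_Compl)
  ultimately have "meager_in euclidean (((UNIV - a) - U') \<union> (U' - (UNIV - a)))"
    by (rule meager_subset[rotated])
  moreover have "open U'" unfolding U'_def by simp
  ultimately show ?case by blast
next
  case (Union a)
  have "\<forall>i. \<exists>U::'a set. open U \<and> meager_in euclidean ((a i - U) \<union> (U - a i))"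
    using Union.IH by blast
  from choice[OF this] obtain U :: "nat \<Rightarrow> 'a set" where
    U: "\<forall>i. open (U i) \<and> meager_in euclidean ((a i - U i) \<union> (U i - a i))"
    by (elim exE) (rule that)
  have "((\<Union>i. a i) - (\<Union>i. U i)) \<union> ((\<Union>i. U i) - (\<Union>i. a i)) \<subseteq> (\<Union>i. (a i - U i) \<union> (U i - a i))"
    by blast
  moreover have "meager_in euclidean (\<Union>i. (a i - U i) \<union> (U i - a i))"
    using U by (intro meager_UN_nat) blast
  ultimately have "meager_in euclidean (((\<Union>i. a i) - (\<Union>i. U i)) \<union> ((\<Union>i. U i) - (\<Union>i. a i)))"
    by (rule meager_subset[rotated])
  moreover have "open (\<Union>i. U i)" using U by blast
  ultimately show ?case by blast
qed


lemma compact_countable_dense: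
  fixes K :: "'k::metric_space set"
  assumes "compact K"
  shows "\<exists>D. countable D \<and> D \<subseteq> K \<and> (\<forall>x\<in>K. \<forall>e>0. \<exists>y\<in>D. dist y x < e)"
proof -
  have "\<forall>n::nat. \<exists>F::'k set. finite F \<and> F \<subseteq> K \<and> K \<subseteq> (\<Union>y\<in>F. ball y (inverse (real (Suc n))))"
  proof
    fix n :: nat
    have "K \<subseteq> (\<Union>y\<in>K. ball y (inverse (real (Suc n))))" by auto
    then obtain F where "F \<subseteq> K" "finite F" "K \<subseteq> (\<Union>y\<in>F. ball y (inverse (real (Suc n))))"
      using compactE_image[OF assms, of K "\<lambda>y. ball y (inverse (real (Suc n)))"] by auto
    then show "\<exists>F::'k set. finite F \<and> F \<subseteq> K \<and> K \<subseteq> (\<Union>y\<in>F. ball y (inverse (real (Suc n))))"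
      by blast
  qed
  from choice[OF this] obtain F :: "nat \<Rightarrow> 'k set" where
    F: "\<forall>n. finite (F n) \<and> F n \<subseteq> K \<and> K \<subseteq> (\<Union>y\<in>F n. ball y (inverse (real (Suc n))))"
    by (elim exE) (rule that)
  define D where "D = (\<Union>n. F n)"
  have "countable D" unfolding D_def using F by (simp add: countable_finite)
  moreover have "D \<subseteq> K" unfolding D_def using F by blast
  moreover have "\<forall>x\<in>K. \<forall>e>0. \<exists>y\<in>D. dist y x < e"
  proof (intro ballI allI impI)
    fix x e assume x: "x \<in> K" and e: "(0::real) < e"
    obtain n where n: "inverse (real (Suc n)) < e" using reals_Archimedean[OF e] by blast
    obtain y where y: "y \<in> F n" "x \<in> ball y (inverse (real (Suc n)))" using F x by blast
    have "dist y x < e" using y(2) n by simp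
    then show "\<exists>y\<in>D. dist y x < e" using y(1) unfolding D_def by blast
  qed
  ultimately show ?thesis by blast
qed


lemma translate_nd:
  fixes C :: "'a::topological_group_add set"
  assumes "closed C" "interior C = {}"
  shows "nowhere_dense_in euclidean {g. -g + c \<in> C}"
proof (rule nd_closed)
  have "continuous_on UNIV (\<lambda>g::'a. -g + c)" by (intro continuous_intros)
  then have "closed ((\<lambda>g. -g+c) -` C \<inter> UNIV)"
    using continuous_on_closed_vimage[OF closed_UNIV] assms(1) by blast
  then show "closedin euclidean {g. -g + c \<in> C}" by (simp add: vimage_def)
  show "euclidean interior_of {g. -g + c \<in> C} = {}"
  proof (rule ccontr)
    define W where "W = interior {g. -g + c \<in> C}"
    assume "euclidean interior_of {g. -g + c \<in> C} \<noteq> {}"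
    then obtain w where w: "w \<in> W" unfolding W_def by auto
    have "open W" unfolding W_def by simp
    define W' where "W' = (\<lambda>d. c + - d) -` W"
    have "continuous_on UNIV (\<lambda>d::'a. c + - d)" by (intro continuous_intros)
    then have "open ((\<lambda>d. c + - d) -` W \<inter> UNIV)"
      using continuous_on_open_vimage[OF open_UNIV] \<open>open W\<close> by blast
    then have "open W'" unfolding W'_def by simp
    have "W' \<subseteq> C"
    proof
      fix d assume "d \<in> W'"
      then have "c + - d \<in> W" unfolding W'_def by simp
      then have "- (c + - d) + c \<in> C" using interior_subset unfolding W_def by blast
      moreover have "- (c + - d) + c = d" by (simp add: minus_add add.assoc)
      ultimately show "d \<in> C" by simp
    qed
    then have "W' \<subseteq> interior C" using \<open>open W'\<close> by (simp add: interior_maximal)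
    moreover have "-w + c \<in> W'"
    proof -
      have "c + - (-w + c) = w" by (simp add: minus_add add.assoc)
      then show ?thesis using w unfolding W'_def by simp
    qed
    ultimately show False using assms(2) by blast
  qed
qed


theorem theorem2p3:
  fixes A :: "'a::{polish_space, topological_group_add} set"
  assumes "haar_meager TYPE('k::metric_space) A"
  shows "meager_in euclidean A"
proof (rule ccontr)
  assume nA: "\<not> meager_in euclidean A"
  obtain B :: "'a set" and K :: "'k set" and f :: "'k \<Rightarrow> 'a" where
    B: "B \<in> sets borel" "A \<subseteq> B" and K: "compact K" "K \<noteq> {}" and f: "continuous_on K f"
    and hm: "\<And>g h. meager_in (top_of_set K) {x \<in> K. f x \<in> (\<lambda>b. g + b + h) ` B}"
    using assms unfolding haar_meager_def by blast
  obtain U :: "'a set" where U: "open U" "meager_in euclidean ((B - U) \<union> (U - B))"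
    using borel_baire[OF B(1)] by blast
  define M where "M = (B - U) \<union> (U - B)"
  have "U \<noteq> {}"
  proof
    assume "U = {}"
    then have "A \<subseteq> (B - U) \<union> (U - B)" using B(2) by blast
    then show False using nA meager_subset[OF U(2)] by blast
  qed
  then obtain u0 where u0: "u0 \<in> U" by blast
  obtain N :: "nat \<Rightarrow> 'a set" where N: "\<And>n. nowhere_dense_in euclidean (N n)" "M \<subseteq> (\<Union>n. N n)"
    using U(2) unfolding M_def[symmetric] meager_in_def by blast
  define C where "C j = closure (N j)" for j
  have Cc: "closed (C j)" for j unfolding C_def by simp
  have Ci: "interior (C j) = {}" for j using N(1)[of j] unfolding C_def nowhere_dense_in_def by simp
  have MC: "M \<subseteq> (\<Union>j. C j)" using N(2) closure_subset unfolding C_def by blast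
  obtain D :: "'k set" where D: "countable D" "D \<subseteq> K" "\<And>x e. x \<in> K \<Longrightarrow> 0 < e \<Longrightarrow> \<exists>y\<in>D. dist y x < e"
    using compact_countable_dense[OF K(1)] by blast
  define Bad where "Bad j x r = {g::'a. \<forall>k\<in>K \<inter> ball x (inverse (real (Suc r))). -g + f k \<in> C j}"
    for j :: nat and x :: 'k and r :: nat
  have Bad_nd: "nowhere_dense_in euclidean (Bad j x r)" if "x \<in> K" for j x r
  proof (rule nd_subset[OF translate_nd[OF Cc[of j] Ci[of j], where c="f x"]])
    show "Bad j x r \<subseteq> {g. -g + f x \<in> C j}" unfolding Bad_def using that by auto
  qed
  define BadAll where "BadAll = (\<Union>(j, x, r) \<in> UNIV \<times> D \<times> UNIV. Bad j x r)"
  have "meager_in euclidean BadAll"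
    unfolding BadAll_def
  proof (rule meager_UN_countable)
    show "countable (UNIV \<times> D \<times> (UNIV :: nat set) :: (nat \<times> 'k \<times> nat) set)"
      using D(1) by simp
    fix i :: "nat \<times> 'k \<times> nat" assume "i \<in> UNIV \<times> D \<times> UNIV"
    then show "meager_in euclidean (case i of (j, x, r) \<Rightarrow> Bad j x r)"
      using Bad_nd D(2) by (auto split: prod.splits intro!: nd_imp_meager)
  qed
  then have intBad: "interior BadAll = {}"
    using meager_interior_empty[OF disjI1[OF completely_metrizable_space_euclidean]] by simp
  obtain k0 where k0: "k0 \<in> K" using K(2) by blast
  define Og where "Og = {g::'a. -g + f k0 \<in> U}"
  have "open Og"
  proof -
    have "continuous_on UNIV (\<lambda>g::'a. -g + f k0)" by (intro continuous_intros)
    then have "open ((\<lambda>g. -g + f k0) -` U \<inter> UNIV)"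
      using continuous_on_open_vimage[OF open_UNIV] U(1) by blast
    then show ?thesis unfolding Og_def by (simp add: vimage_def)
  qed
  have "f k0 + - u0 \<in> Og"
  proof -
    have "- (f k0 + - u0) + f k0 = u0" by (simp add: minus_add add.assoc)
    then show ?thesis unfolding Og_def using u0 by simp
  qed
  have "\<not> Og \<subseteq> BadAll"
  proof
    assume "Og \<subseteq> BadAll"
    then have "Og \<subseteq> interior BadAll" using \<open>open Og\<close> by (simp add: interior_maximal)
    then show False using intBad \<open>f k0 + - u0 \<in> Og\<close> by blast
  qed
  then obtain g where g: "g \<in> Og" "g \<notin> BadAll" by blast
  define X where "X = top_of_set K"
  have gf: "continuous_on K (\<lambda>k. -g + f k)" using f by (intro continuous_intros)
  define V where "V = K \<inter> (\<lambda>k. -g + f k) -` U"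
  have V_open: "openin X V" unfolding X_def V_def
    by (rule continuous_openin_preimage_gen[OF gf U(1)])
  have "k0 \<in> V" using g(1) k0 unfolding V_def Og_def by simp
  define Z where "Z j = K \<inter> (\<lambda>k. -g + f k) -` C j" for j
  have Z_nd: "nowhere_dense_in X (Z j)" for j
  proof (rule nd_closed)
    show "closedin X (Z j)" unfolding X_def Z_def
      by (rule continuous_closedin_preimage[OF gf Cc])
    show "X interior_of Z j = {}"
    proof (rule ccontr)
      define W where "W = X interior_of Z j"
      assume "X interior_of Z j \<noteq> {}"
      then obtain k where k: "k \<in> W" unfolding W_def by auto
      have "openin X W" unfolding W_def by simp
      then obtain e where e: "e > 0" "\<And>k'. k' \<in> K \<Longrightarrow> dist k' k < e \<Longrightarrow> k' \<in> W"
        using k unfolding X_def openin_euclidean_subtopology_iff by blast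
      have WZ: "W \<subseteq> Z j" unfolding W_def by (rule interior_of_subset)
      have kK: "k \<in> K" using k WZ unfolding Z_def by blast
      obtain r where r: "inverse (real (Suc r)) < e / 2" using reals_Archimedean[of "e/2"] e(1) by auto
      obtain x where x: "x \<in> D" "dist x k < inverse (real (Suc r))"
        using D(3)[OF kK] by (metis inverse_positive_iff_positive of_nat_0_less_iff zero_less_Suc)
      have "g \<in> Bad j x r"
        unfolding Bad_def
      proof (intro CollectI ballI)
        fix k' assume k': "k' \<in> K \<inter> ball x (inverse (real (Suc r)))"
        have "dist k' k \<le> dist k' x + dist x k" by (rule dist_triangle)
        also have "\<dots> < e" using k' x(2) r by (simp add: dist_commute)
        finally have "k' \<in> W" using e(2) k' by blast
        then show "-g + f k' \<in> C j" using WZ unfolding Z_def by blast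
      qed
      then have "g \<in> BadAll" unfolding BadAll_def using x(1) by blast
      then show False using g(2) by blast
    qed
  qed
  define S where "S = {x \<in> K. f x \<in> (\<lambda>b. g + b + 0) ` B}"
  have "V \<subseteq> S \<union> (\<Union>j. Z j)"
  proof
    fix k assume k: "k \<in> V"
    show "k \<in> S \<union> (\<Union>j. Z j)"
    proof (cases "-g + f k \<in> B")
      case True
      have "f k = g + (-g + f k) + 0" by (simp add: add.assoc[symmetric])
      then have "k \<in> S" using True k unfolding S_def V_def by blast
      then show ?thesis by blast
    next
      case False
      then have "-g + f k \<in> M" using k unfolding V_def M_def by blast
      then obtain j where "-g + f k \<in> C j" using MC by blast
      then have "k \<in> Z j" using k unfolding Z_def V_def by blast
      then show ?thesis by blast
    qed
  qed
  moreover have "meager_in X (S \<union> (\<Union>j. Z j))"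
    unfolding X_def S_def
    by (intro meager_Un hm meager_UN_nat nd_imp_meager Z_nd[unfolded X_def])
  ultimately have "meager_in X V" by (rule meager_subset[rotated])
  moreover have "locally_compact_space X \<and> regular_space X"
  proof
    have "compact_space X" unfolding X_def using K(1)
      by (intro compact_space_subtopology) simp
    then show "locally_compact_space X" by (rule compact_imp_locally_compact_space)
    show "regular_space X" unfolding X_def
      by (intro regular_space_subtopology regular_space_euclidean)
  qed
  ultimately have "X interior_of V = {}" using meager_interior_empty by blast
  moreover have "X interior_of V = V" using V_open by (rule interior_of_openin)
  ultimately show False using \<open>k0 \<in> V\<close> by blast
qed

end
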